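(* Let $G$ be a finite simple graph containing two vertices $u$ and $v$ such that there is a unique path in $G$ between $u$ and $v$, this path has length at least $7$, and every inner vertex of this path has degree $2$ in $G$. Then $G$ has at least one adjacency eigenvalue that is not an integer. *)

theory Defs
  imports "Jordan_Normal_Form.Char_Poly"
begin

definition simple_graph :: "nat \<Rightarrow> (nat \<Rightarrow> nat \<Rightarrow> bool) \<Rightarrow> bool" where
  "simple_graph n E \<longleftrightarrow>
     (\<forall>i j. E i j \<longrightarrow> i < n \<and> j < n) \<and> (\<forall>i j. E i j \<longrightarrow> E j i) \<and> (\<forall>i. \<not> E i i)"

definition adj_matrix :: "nat \<Rightarrow> (nat \<Rightarrow> nat \<Rightarrow> bool) \<Rightarrow> real mat" where
  "adj_matrix n E = mat n n (\<lambda>(i, j). if E i j then 1 else 0)"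

definition graph_degree :: "nat \<Rightarrow> (nat \<Rightarrow> nat \<Rightarrow> bool) \<Rightarrow> nat \<Rightarrow> nat" where
  "graph_degree n E x = card {y. y < n \<and> E x y}"

text \<open>A path from u to v, given as the list of its vertices (pairwise distinct,
consecutive ones adjacent). Its length (number of edges) is length p - 1.\<close>
definition graph_path :: "(nat \<Rightarrow> nat \<Rightarrow> bool) \<Rightarrow> nat list \<Rightarrow> nat \<Rightarrow> nat \<Rightarrow> bool" where
  "graph_path E p u v \<longleftrightarrow>
     p \<noteq> [] \<and> hd p = u \<and> last p = v \<and> distinct p \<and>
     (\<forall>i. Suc i < length p \<longrightarrow> E (p ! i) (p ! Suc i))"

end

theory Submission
  imports Defs "HOL-Analysis.Function_Topology"
begin

definition ipr :: "nat \<Rightarrow> (nat \<Rightarrow> real) \<Rightarrow> (nat \<Rightarrow> real) \<Rightarrow> real" where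
  "ipr n u v = (\<Sum>i<n. u i * v i)"

lemma ipr_comm: "ipr n u v = ipr n v u" by (simp add: ipr_def mult.commute)
lemma ipr_lin2: "ipr n u (\<lambda>i. a * v i + b * w i) = a * ipr n u v + b * ipr n u w"
  by (simp add: ipr_def algebra_simps sum.distrib sum_distrib_left)
lemma ipr_lin1: "ipr n (\<lambda>i. a * v i + b * w i) u = a * ipr n v u + b * ipr n w u"
  by (simp add: ipr_def algebra_simps sum.distrib sum_distrib_left)
lemma ipr_nonneg: "0 \<le> ipr n u u" by (simp add: ipr_def sum_nonneg)
lemma ipr_zero: "ipr n u u = 0 \<Longrightarrow> i < n \<Longrightarrow> u i = 0"
  unfolding ipr_def using sum_nonneg_eq_0_iff[of "{..<n}" "\<lambda>i. u i * u i"] by auto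
lemma ipr_cont:
  assumes "\<And>i. continuous_on UNIV (\<lambda>v. f v i)" "\<And>i. continuous_on UNIV (\<lambda>v. g v i)"
  shows "continuous_on UNIV (\<lambda>v. ipr n (f v) (g v))"
  unfolding ipr_def by (intro continuous_intros assms)
lemma ipr_scale: "ipr n (\<lambda>i. c * u i) (\<lambda>i. d * v i) = c * d * ipr n u v"
  by (simp add: ipr_def sum_distrib_left algebra_simps)

lemma ipr_expand2: "ipr n (\<lambda>i. u i + t * w i) (\<lambda>i. a i + t * b i)
   = ipr n u a + t * ipr n u b + t * ipr n w a + t * t * ipr n w b"
proof -
  have "ipr n (\<lambda>i. u i + t * w i) (\<lambda>i. a i + t * b i)
     = (\<Sum>i<n. u i * a i + t * (u i * b i) + t * (w i * a i) + t * t * (w i * b i))"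
    unfolding ipr_def by (rule sum.cong) (simp_all add: algebra_simps)
  also have "\<dots> = ipr n u a + t * ipr n u b + t * ipr n w a + t * t * ipr n w b"
    unfolding ipr_def by (simp add: sum.distrib sum_distrib_left)
  finally show ?thesis .
qed

lemma sq_le1: "(y::real) * y \<le> 1 \<Longrightarrow> y \<in> {-1..1}"
  using abs_square_le_1[of y] by (simp add: power2_eq_square abs_le_iff)

lemma rayleigh:
  fixes T :: "(nat \<Rightarrow> real) \<Rightarrow> (nat \<Rightarrow> real)" and S :: "(nat \<Rightarrow> real) set"
  assumes cont: "\<And>i. continuous_on UNIV (\<lambda>v. T v i)"
    and lin: "\<And>u v a b. T (\<lambda>i. a * u i + b * v i) = (\<lambda>i. a * T u i + b * T v i)"
    and sym: "\<And>u v. ipr n u (T v) = ipr n (T u) v"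
    and Sv: "\<And>v i. v \<in> S \<Longrightarrow> n \<le> i \<Longrightarrow> v i = 0"
    and Sc: "closed S"
    and Slin: "\<And>u v a b. u \<in> S \<Longrightarrow> v \<in> S \<Longrightarrow> (\<lambda>i. a * u i + b * v i) \<in> S"
    and ST: "\<And>v. v \<in> S \<Longrightarrow> T v \<in> S"
    and x: "x \<in> S" "ipr n x x \<noteq> 0"
  shows "\<exists>v\<in>S. ipr n v v = 1 \<and> (\<exists>lam. T v = (\<lambda>i. lam * v i) \<and>
            (\<forall>u\<in>S. lam * ipr n u u \<le> ipr n u (T u)))"
proof -
  define B where "B = PiE UNIV (\<lambda>i::nat. if i < n then {-1..1::real} else {0})"
  have cB: "compact B"
  proof -
    have "compactin (product_topology (\<lambda>_. euclidean) UNIV) B"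
      unfolding B_def by (subst compactin_PiE) auto
    then show ?thesis by (simp add: euclidean_product_topology)
  qed
  have cl1: "closed {v. ipr n v v = 1}"
    by (rule closed_Collect_eq) (auto intro: ipr_cont)
  have sub: "S \<inter> {v. ipr n v v = 1} \<subseteq> B"
  proof
    fix v assume v: "v \<in> S \<inter> {v. ipr n v v = 1}"
    have "v i \<in> (if i < n then {-1..1::real} else {0})" for i
    proof (cases "i < n")
      case True
      have "v i * v i \<le> (\<Sum>j<n. v j * v j)"
        using True by (intro member_le_sum) auto
      then have "v i * v i \<le> 1" using v by (simp add: ipr_def)
      then have "v i \<in> {-1..1}" by (rule sq_le1)
      then show ?thesis using True by simp
    next
      case False
      then show ?thesis using Sv v by auto
    qed
    then show "v \<in> B" unfolding B_def by (simp add: PiE_UNIV_domain)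
  qed
  define K where "K = S \<inter> {v. ipr n v v = 1}"
  have KB: "K = B \<inter> K" using sub K_def by blast
  have "closed K" unfolding K_def using Sc cl1 by (rule closed_Int)
  then have "compact (B \<inter> K)" using cB by (intro compact_Int_closed)
  then have cK: "compact K" using KB by simp
  define q where "q v = ipr n v (T v)" for v
  have qc: "continuous_on K q" unfolding q_def
    by (rule continuous_on_subset[OF ipr_cont]) (auto simp: cont)
  have homog: "\<And>u a. T (\<lambda>i. a * u i) = (\<lambda>i. a * T u i)" using lin[where b=0] by simp
  have Shom: "\<And>u a. u \<in> S \<Longrightarrow> (\<lambda>i. a * u i) \<in> S" using Slin[where b=0] by simp
  have norm: "(\<lambda>i. (1 / sqrt (ipr n u u)) * u i) \<in> K" if "u \<in> S" "ipr n u u \<noteq> 0" for u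
  proof -
    have pos: "ipr n u u > 0" using ipr_nonneg that(2) by (simp add: order_le_neq_trans)
    have "ipr n (\<lambda>i. (1 / sqrt (ipr n u u)) * u i) (\<lambda>i. (1 / sqrt (ipr n u u)) * u i) = 1"
      unfolding ipr_scale using pos by simp
    then show ?thesis unfolding K_def using Shom[OF that(1), of "1 / sqrt (ipr n u u)"] by simp
  qed
  have Kne: "K \<noteq> {}" using norm[OF x] by auto
  obtain v0 where v0: "v0 \<in> K" "\<And>y. y \<in> K \<Longrightarrow> q v0 \<le> q y"
    using continuous_attains_inf[OF cK Kne qc] by blast
  define lam where "lam = q v0"
  have v0S: "v0 \<in> S" and v01: "ipr n v0 v0 = 1" using v0 K_def by auto
  have bound: "lam * ipr n u u \<le> q u" if u: "u \<in> S" for u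
  proof (cases "ipr n u u = 0")
    case True
    then have "q u = 0" unfolding q_def ipr_def using ipr_zero[OF True] by simp
    then show ?thesis using True by simp
  next
    case False
    define s where "s = ipr n u u"
    have pos: "s > 0" using ipr_nonneg False s_def by (simp add: order_le_neq_trans)
    define d where "d = 1 / sqrt s"
    have "lam \<le> q (\<lambda>i. d * u i)" unfolding lam_def d_def s_def by (rule v0(2)[OF norm[OF u False]])
    also have "q (\<lambda>i. d * u i) = d * d * q u" unfolding q_def homog by (simp add: ipr_scale)
    also have "d * d = 1 / s" using pos by (simp add: d_def)
    finally have "lam \<le> q u / s" by simp
    then show ?thesis using pos by (simp add: s_def field_simps)
  qed
  have lagr: "ipr n w (T v0) - lam * ipr n w v0 = 0" if w: "w \<in> S" for w
  proof -
    define a where "a = ipr n w (T v0) - lam * ipr n w v0"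
    define b where "b = q w - lam * ipr n w w"
    have key: "0 \<le> 2*t*a + t*t*b" for t
    proof -
      let ?u = "\<lambda>i. v0 i + t * w i"
      have "?u \<in> S" using Slin[OF v0S w, where a=1 and b=t] by simp
      then have le: "lam * ipr n ?u ?u \<le> q ?u" using bound by blast
      have linu: "T ?u = (\<lambda>i. T v0 i + t * T w i)" using lin[where u=v0 and v=w and a=1 and b=t] by simp
      have e1: "ipr n ?u ?u = ipr n v0 v0 + 2*t*ipr n w v0 + t*t*ipr n w w"
        unfolding ipr_expand2 ipr_comm[of n v0 w] by simp
      have sv: "ipr n v0 (T w) = ipr n w (T v0)" using sym[of v0 w] ipr_comm[of n "T v0" w] by simp
      have e2: "q ?u = q v0 + 2*t*ipr n w (T v0) + t*t*q w"
        unfolding q_def linu ipr_expand2 sv by simp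
      have "2*t*a + t*t*b = q ?u - lam * ipr n ?u ?u"
        unfolding e1 e2 a_def b_def lam_def v01 by (simp add: algebra_simps)
      then show ?thesis using le by simp
    qed
    have "0 \<le> 2*a + b" "0 \<le> -2*a + b" using key[of 1] key[of "-1"] by auto
    then have b0: "b \<ge> 0" by simp
    define t where "t = - a / (b + 1)"
    have tc: "t * (b + 1) = - a" using b0 by (simp add: t_def)
    have "0 \<le> (2*t*a + t*t*b) * (b+1)^2" using key[of t] b0 by simp
    also have "(2*t*a + t*t*b) * (b+1)^2 = 2*a*(t*(b+1))*(b+1) + (t*(b+1))*(t*(b+1))*b"
      by (simp add: algebra_simps power2_eq_square)
    also have "\<dots> = - (a*a) * (b+2)" unfolding tc by (simp add: algebra_simps)
    finally have h: "a * a * (b + 2) \<le> 0" by simp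
    have "a * a * (b + 2) \<ge> 0" using b0 by simp
    then have "a * a * (b + 2) = 0" using h by simp
    then have "a = 0" using b0 by simp
    then show ?thesis by (simp add: a_def)
  qed
  define w where "w = (\<lambda>i. T v0 i - lam * v0 i)"
  have wS: "w \<in> S" unfolding w_def using Slin[OF ST[OF v0S] v0S, where a=1 and b="-lam"] by simp
  have "ipr n w w = ipr n w (T v0) - lam * ipr n w v0"
    using ipr_lin2[of n w 1 "T v0" "-lam" v0] by (simp add: w_def)
  then have ww: "ipr n w w = 0" using lagr[OF wS] by simp
  have "T v0 = (\<lambda>i. lam * v0 i)"
  proof
    fix i
    have "w i = 0"
      using ipr_zero[OF ww] Sv[OF wS] by (cases "i < n") auto
    then show "T v0 i = lam * v0 i" unfolding w_def by simp
  qed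
  then show ?thesis using v0S v01 bound unfolding q_def by blast
qed

definition TA :: "nat \<Rightarrow> (nat \<Rightarrow> nat \<Rightarrow> bool) \<Rightarrow> (nat \<Rightarrow> real) \<Rightarrow> (nat \<Rightarrow> real)" where
  "TA n E v = (\<lambda>i. if i < n then (\<Sum>j<n. (if E i j then 1 else 0) * v j) else 0)"

lemma TA_lin: "TA n E (\<lambda>i. a * u i + b * v i) = (\<lambda>i. a * TA n E u i + b * TA n E v i)"
  unfolding TA_def by (auto simp: sum.distrib sum_distrib_left algebra_simps)

lemma TA_comb: "TA n E (\<lambda>i. u i - 5 * v i + 4 * w i) = (\<lambda>i. TA n E u i - 5 * TA n E v i + 4 * TA n E w i)"
  unfolding TA_def by (auto simp: sum.distrib sum_subtractf sum_distrib_left algebra_simps)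

lemma TA_add: "TA n E (\<lambda>i. u i + v i) = (\<lambda>i. TA n E u i + TA n E v i)"
  using TA_lin[of n E 1 u 1 v] by simp

lemma TA_hom: "TA n E (\<lambda>i. c * u i) = (\<lambda>i. c * TA n E u i)"
  using TA_lin[of n E c u 0 u] by simp

lemma TA_0: "n \<le> i \<Longrightarrow> TA n E v i = 0"
  by (simp add: TA_def)

lemma TA_sym:
  assumes Es: "\<And>i j. E i j \<Longrightarrow> E j i"
  shows "ipr n u (TA n E v) = ipr n (TA n E u) v"
proof -
  have "ipr n u (TA n E v) = (\<Sum>i<n. \<Sum>j<n. u i * (if E i j then 1 else 0) * v j)"
    by (simp add: ipr_def TA_def sum_distrib_left mult.assoc)
  also have "\<dots> = (\<Sum>j<n. \<Sum>i<n. u i * (if E i j then 1 else 0) * v j)"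
    by (rule sum.swap)
  also have "\<dots> = (\<Sum>j<n. \<Sum>i<n. (if E j i then 1 else 0) * u i * v j)"
  proof (intro sum.cong refl)
    fix i j
    have "E i j = E j i" using Es by blast
    then show "u j * (if E j i then 1 else 0) * v i = (if E i j then 1 else 0) * u j * v i"
      by simp
  qed
  also have "\<dots> = ipr n (TA n E u) v"
    by (simp add: ipr_def TA_def sum_distrib_right)
  finally show ?thesis .
qed

lemma TA_cont: "continuous_on UNIV (TA n E)"
proof (rule continuous_on_coordinatewise_then_product)
  fix i
  show "continuous_on UNIV (\<lambda>v. TA n E v i)"
  proof (cases "i < n")
    case True
    then show ?thesis unfolding TA_def
      by (simp add: continuous_on_sum continuous_on_mult_left)
  next
    case False
    then show ?thesis unfolding TA_def by simp
  qed
qed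

lemma pw_lin: "(TA n E ^^ k) (\<lambda>i. a * u i + b * v i) = (\<lambda>i. a * (TA n E ^^ k) u i + b * (TA n E ^^ k) v i)"
  by (induction k) (simp_all add: TA_lin)

lemma pw_sym:
  assumes Es: "\<And>i j. E i j \<Longrightarrow> E j i"
  shows "ipr n u ((TA n E ^^ k) v) = ipr n ((TA n E ^^ k) u) v"
proof (induction k arbitrary: u)
  case 0
  then show ?case by simp
next
  case (Suc k)
  have "ipr n u ((TA n E ^^ Suc k) v) = ipr n u (TA n E ((TA n E ^^ k) v))" by simp
  also have "\<dots> = ipr n (TA n E u) ((TA n E ^^ k) v)" by (rule TA_sym[OF Es])
  also have "\<dots> = ipr n ((TA n E ^^ k) (TA n E u)) v" by (rule Suc.IH)
  also have "(TA n E ^^ k) (TA n E u) = (TA n E ^^ Suc k) u" by (simp add: funpow_swap1)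
  finally show ?case .
qed

lemma pw_cont: "continuous_on UNIV (TA n E ^^ k)"
proof (induction k)
  case 0
  then show ?case by (simp add: id_def)
next
  case (Suc k)
  have "continuous_on UNIV (TA n E \<circ> (TA n E ^^ k))"
    by (rule continuous_on_compose[OF Suc.IH continuous_on_subset[OF TA_cont]]) simp
  then show ?case by simp
qed

lemma pw_coord: "continuous_on UNIV (\<lambda>v. (TA n E ^^ k) v i)"
  using continuous_on_product_then_coordinatewise[OF pw_cont] .

lemma pw_0: "(\<And>i. n \<le> i \<Longrightarrow> v i = 0) \<Longrightarrow> n \<le> i \<Longrightarrow> (TA n E ^^ k) v i = 0"
  by (cases k) (auto simp: TA_0)

lemma pw_eig:
  assumes ev: "TA n E v = (\<lambda>i. c * v i)"
  shows "(TA n E ^^ k) v = (\<lambda>i. c ^ k * v i)"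
proof (induction k)
  case 0
  then show ?case by simp
next
  case (Suc k)
  have "(TA n E ^^ Suc k) v = TA n E (\<lambda>i. c ^ k * v i)" using Suc by simp
  also have "\<dots> = (\<lambda>i. c ^ k * (c * v i))" unfolding TA_hom ev ..
  finally show ?case by (simp add: algebra_simps)
qed

lemma pw_comm: "(TA n E ^^ k) (TA n E v) = TA n E ((TA n E ^^ k) v)"
  by (simp add: funpow_swap1)

definition TC :: "nat \<Rightarrow> (nat \<Rightarrow> nat \<Rightarrow> bool) \<Rightarrow> (nat \<Rightarrow> real) \<Rightarrow> (nat \<Rightarrow> real)" where
  "TC n E v = (\<lambda>i. (TA n E ^^ 6) v i - 5 * (TA n E ^^ 4) v i + 4 * (TA n E ^^ 2) v i)"

lemma ipr_comb_r: "ipr n u (\<lambda>i. f i - 5 * g i + 4 * h i) = ipr n u f - 5 * ipr n u g + 4 * ipr n u h"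
  by (simp add: ipr_def sum_subtractf sum.distrib sum_distrib_left algebra_simps)
lemma ipr_comb_l: "ipr n (\<lambda>i. f i - 5 * g i + 4 * h i) u = ipr n f u - 5 * ipr n g u + 4 * ipr n h u"
  by (simp add: ipr_def sum_subtractf sum.distrib sum_distrib_left algebra_simps)

lemma TC_lin: "TC n E (\<lambda>i. a * u i + b * v i) = (\<lambda>i. a * TC n E u i + b * TC n E v i)"
  unfolding TC_def pw_lin by (rule ext) (simp add: algebra_simps)

lemma TC_sym:
  assumes Es: "\<And>i j. E i j \<Longrightarrow> E j i"
  shows "ipr n u (TC n E v) = ipr n (TC n E u) v"
  unfolding TC_def ipr_comb_r ipr_comb_l
  using pw_sym[OF Es, where k=6 and u=u and v=v] pw_sym[OF Es, where k=4 and u=u and v=v]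
    pw_sym[OF Es, where k=2 and u=u and v=v] by simp

lemma TC_TA: "TC n E (TA n E v) = TA n E (TC n E v)"
  unfolding TC_def TA_comb pw_comm ..

lemma TC_cont: "continuous_on UNIV (\<lambda>v. TC n E v i)"
  unfolding TC_def by (intro continuous_intros pw_coord)

lemma TC_eig: "TA n E v = (\<lambda>i. c * v i) \<Longrightarrow> TC n E v = (\<lambda>i. (c^6 - 5 * c^4 + 4 * c^2) * v i)"
  unfolding TC_def by (simp add: pw_eig algebra_simps)

lemma int_poly_nonneg: "(m::int)^6 - 5 * m^4 + 4 * m^2 \<ge> 0"
proof -
  have eq: "m^6 - 5 * m^4 + 4 * m^2 = m^2 * ((m^2 - 1) * (m^2 - 4))"
    by (simp add: algebra_simps power_def)
  show ?thesis
  proof (cases "\<bar>m\<bar> \<le> 2")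
    case True
    then have "m \<in> {-2,-1,0,1,2}" by auto
    then show ?thesis by auto
  next
    case False
    then have a: "3 \<le> \<bar>m\<bar>" by simp
    have "3 * 3 \<le> \<bar>m\<bar> * \<bar>m\<bar>" using mult_mono[OF a a] by simp
    then have "4 \<le> \<bar>m\<bar> * \<bar>m\<bar>" by simp
    then have "4 \<le> m^2" by (simp add: power2_eq_square abs_mult_self_eq)
    then show ?thesis unfolding eq by (intro mult_nonneg_nonneg) auto
  qed
qed

lemma ipr_add1: "ipr n (\<lambda>i. u i + v i) w = ipr n u w + ipr n v w"
  by (simp add: ipr_def sum.distrib algebra_simps)
lemma ipr_add2: "ipr n w (\<lambda>i. u i + v i) = ipr n w u + ipr n w v"
  by (simp add: ipr_def sum.distrib algebra_simps)

lemma ipr_ev: "a < n \<Longrightarrow> ipr n (\<lambda>i. if i = a then 1 else 0) (\<lambda>i. if i = b then 1 else 0) = (if a = b then 1 else 0)"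
  unfolding ipr_def by (simp add: if_distrib[of "\<lambda>x. x * _"] sum.delta cong: if_cong)

theorem theorem18:
  fixes n :: nat and E :: "nat \<Rightarrow> nat \<Rightarrow> bool" and u v :: nat and p :: "nat list"
  assumes "simple_graph n E"
    and "u < n" and "v < n"
    and "graph_path E p u v"
    and "\<forall>q. graph_path E q u v \<longrightarrow> q = p"
    and "length p - 1 \<ge> 7"
    and "\<forall>i. 0 < i \<and> i < length p - 1 \<longrightarrow> graph_degree n E (p ! i) = 2"
  shows "\<exists>k::real. eigenvalue (adj_matrix n E) k \<and> k \<notin> \<int>"
proof -
  have Eb: "\<And>i j. E i j \<Longrightarrow> i < n \<and> j < n" and Es: "\<And>i j. E i j \<Longrightarrow> E j i"
    using assms(1) unfolding simple_graph_def by blast+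
  have L8: "8 \<le> length p" using assms(6) by simp
  have pedge: "\<And>i. Suc i < length p \<Longrightarrow> E (p!i) (p!Suc i)"
    using assms(4) unfolding graph_path_def by blast
  have pdist: "distinct p" using assms(4) unfolding graph_path_def by blast
  have pn: "p!k < n" if "k \<le> 6" for k
    using pedge[of k] Eb that L8 by force
  have d: "(p!a = p!b) = (a = b)" if "a \<le> 6" "b \<le> 6" for a b
    using nth_eq_iff_index_eq[OF pdist, of a b] that L8 by simp
  have nb: "E i (p!k) \<longleftrightarrow> (i = p!(k-1) \<or> i = p!(k+1))" if k: "0 < k" "k \<le> 5" for k i
  proof -
    define N where "N = {y. y < n \<and> E (p!k) y}"
    have cN: "card N = 2" using assms(7) k L8 unfolding N_def graph_degree_def by simp
    have fN: "finite N" unfolding N_def by simp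
    have e1: "E (p!k) (p!(k-1))" using pedge[of "k-1"] k L8 Es by simp
    have e2: "E (p!k) (p!(k+1))" using pedge[of k] k L8 by simp
    have a: "p!(k-1) \<in> N" "p!(k+1) \<in> N" using e1 e2 Eb unfolding N_def by auto
    have ne: "p!(k-1) \<noteq> p!(k+1)" using d[of "k-1" "k+1"] k by simp
    have "{p!(k-1), p!(k+1)} = N"
      using card_subset_eq[OF fN, of "{p!(k-1), p!(k+1)}"] a ne cN by auto
    then show ?thesis using e1 e2 Es Eb unfolding N_def by blast
  qed
  define ev :: "nat \<Rightarrow> nat \<Rightarrow> real" where "ev q = (\<lambda>i. if i = q then 1 else (0::real))" for q
  have TAev: "TA n E (ev (p!k)) = (\<lambda>i. ev (p!(k-1)) i + ev (p!(k+1)) i)" if k: "0 < k" "k \<le> 5" for k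
  proof
    fix i
    have s: "(\<Sum>j<n. (if E i j then 1 else 0) * ev (p!k) j) = (if E i (p!k) then 1 else 0)"
    proof -
      have "(\<Sum>j<n. (if E i j then 1 else 0) * ev (p!k) j)
          = (\<Sum>j<n. if j = p!k then (if E i (p!k) then 1 else 0) else 0)"
        by (rule sum.cong) (auto simp: ev_def)
      also have "\<dots> = (if E i (p!k) then 1 else 0)" using pn[of k] k by (simp add: sum.delta)
      finally show ?thesis .
    qed
    have n1: "p!(k-1) < n" "p!(k+1) < n" using pn[of "k-1"] pn[of "k+1"] k by auto
    have ne: "p!(k-1) \<noteq> p!(k+1)" using d[of "k-1" "k+1"] k by simp
    show "TA n E (ev (p!k)) i = ev (p!(k-1)) i + ev (p!(k+1)) i"
      unfolding TA_def s using nb[OF k, of i] n1 ne by (auto simp: ev_def)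
  qed
  have t1: "TA n E (ev (p!1)) = (\<lambda>i. ev (p!0) i + ev (p!2) i)" using TAev[of 1] by (simp add: eval_nat_numeral)
  have t2: "TA n E (ev (p!2)) = (\<lambda>i. ev (p!1) i + ev (p!3) i)" using TAev[of 2] by (simp add: eval_nat_numeral)
  have t3: "TA n E (ev (p!3)) = (\<lambda>i. ev (p!2) i + ev (p!4) i)" using TAev[of 3] by (simp add: eval_nat_numeral)
  have t4: "TA n E (ev (p!4)) = (\<lambda>i. ev (p!3) i + ev (p!5) i)" using TAev[of 4] by (simp add: eval_nat_numeral)
  have t5: "TA n E (ev (p!5)) = (\<lambda>i. ev (p!4) i + ev (p!6) i)" using TAev[of 5] by (simp add: eval_nat_numeral)
  define x where "x = ev (p!3)"
  have y1: "(TA n E ^^ 1) x = (\<lambda>i. ev (p!2) i + ev (p!4) i)" using t3 by (simp add: x_def)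
  have y2: "(TA n E ^^ 2) x = (\<lambda>i. (ev (p!1) i + ev (p!3) i) + (ev (p!3) i + ev (p!5) i))"
  proof -
    have "(TA n E ^^ 2) x = TA n E ((TA n E ^^ 1) x)" by (simp add: numeral_2_eq_2)
    then show ?thesis unfolding y1 TA_add t2 t4 by simp
  qed
  have y3: "(TA n E ^^ 3) x = (\<lambda>i. ((ev (p!0) i + ev (p!2) i) + (ev (p!2) i + ev (p!4) i))
                 + ((ev (p!2) i + ev (p!4) i) + (ev (p!4) i + ev (p!6) i)))"
  proof -
    have "(TA n E ^^ 3) x = TA n E ((TA n E ^^ 2) x)" by (simp add: numeral_3_eq_3 numeral_2_eq_2)
    then show ?thesis unfolding y2 TA_add t1 t3 t5 by simp
  qed
  have ipev: "ipr n (ev (p!a)) (ev (p!b)) = (if a = b then 1 else 0)" if "a \<le> 6" "b \<le> 6" for a b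
    using ipr_ev[of "p!a" n "p!b"] pn[of a] d[OF that] that unfolding ev_def by simp
  have q1: "ipr n ((TA n E ^^ 1) x) ((TA n E ^^ 1) x) = 2"
    unfolding y1 ipr_add1 ipr_add2 by (simp add: ipev)
  have q2: "ipr n ((TA n E ^^ 2) x) ((TA n E ^^ 2) x) = 6"
    unfolding y2 ipr_add1 ipr_add2 by (simp add: ipev)
  have q3: "ipr n ((TA n E ^^ 3) x) ((TA n E ^^ 3) x) = 20"
    unfolding y3 ipr_add1 ipr_add2 by (simp add: ipev)
  have sq: "ipr n x ((TA n E ^^ (k + k)) x) = ipr n ((TA n E ^^ k) x) ((TA n E ^^ k) x)" for k
  proof -
    have "(TA n E ^^ (k + k)) x = (TA n E ^^ k) ((TA n E ^^ k) x)" by (simp add: funpow_add)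
    then show ?thesis using pw_sym[OF Es, where u=x and k=k and v="(TA n E ^^ k) x"] by simp
  qed
  have e6: "(3::nat) + 3 = 6" "(2::nat) + 2 = 4" "(1::nat) + 1 = 2" by simp_all
  have qx: "ipr n x (TC n E x) = -2"
    unfolding TC_def ipr_comb_r sq[of 3, unfolded e6] sq[of 2, unfolded e6] sq[of 1, unfolded e6] q1 q2 q3
    by simp
  have xx: "ipr n x x = 1"
    using ipev[of 3 3] by (simp add: x_def)
  define V where "V = {w::nat \<Rightarrow> real. \<forall>i. n \<le> i \<longrightarrow> w i = 0}"
  have closedV: "closed V"
  proof -
    have "closed {w::nat \<Rightarrow> real. n \<le> i \<longrightarrow> w i = 0}" for i
      by (cases "n \<le> i") (auto intro: closed_Collect_eq)
    then show ?thesis unfolding V_def by (rule closed_Collect_all)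
  qed
  have xV: "x \<in> V" using pn[of 3] unfolding V_def x_def ev_def by auto
  obtain v0 mu where v0: "v0 \<in> V" "ipr n v0 v0 = 1" "TC n E v0 = (\<lambda>i. mu * v0 i)"
     and mub: "\<forall>w\<in>V. mu * ipr n w w \<le> ipr n w (TC n E w)"
  proof -
    have "\<exists>v\<in>V. ipr n v v = 1 \<and> (\<exists>lam. TC n E v = (\<lambda>i. lam * v i) \<and>
            (\<forall>u\<in>V. lam * ipr n u u \<le> ipr n u (TC n E u)))"
    proof (rule rayleigh)
      show "\<And>i. continuous_on UNIV (\<lambda>v. TC n E v i)" by (rule TC_cont)
      show "\<And>u v a b. TC n E (\<lambda>i. a * u i + b * v i) = (\<lambda>i. a * TC n E u i + b * TC n E v i)"
        by (rule TC_lin)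
      show "\<And>u v. ipr n u (TC n E v) = ipr n (TC n E u) v" by (rule TC_sym[OF Es])
      show "\<And>v i. v \<in> V \<Longrightarrow> n \<le> i \<Longrightarrow> v i = 0" unfolding V_def by blast
      show "closed V" by (rule closedV)
      show "\<And>u v a b. u \<in> V \<Longrightarrow> v \<in> V \<Longrightarrow> (\<lambda>i. a * u i + b * v i) \<in> V"
        unfolding V_def by simp
      show "\<And>v. v \<in> V \<Longrightarrow> TC n E v \<in> V"
        unfolding V_def TC_def by (simp add: pw_0)
      show "x \<in> V" by (rule xV)
      show "ipr n x x \<noteq> 0" using xx by simp
    qed
    then show ?thesis using that by blast
  qed
  have mu: "mu \<le> -2" using mub xV qx xx by force
  define S2 where "S2 = {w::nat \<Rightarrow> real. (\<forall>i. n \<le> i \<longrightarrow> w i = 0) \<and> (\<forall>i. TC n E w i = mu * w i)}"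
  have S2V: "S2 = V \<inter> {w. \<forall>i. TC n E w i = mu * w i}" unfolding S2_def V_def by blast
  have closedS2: "closed S2"
  proof -
    have "closed {w::nat \<Rightarrow> real. \<forall>i. TC n E w i = mu * w i}"
      by (intro closed_Collect_all closed_Collect_eq TC_cont continuous_intros) simp
    then show ?thesis unfolding S2V using closedV by (intro closed_Int)
  qed
  obtain v1 lam where v1: "v1 \<in> S2" "ipr n v1 v1 = 1" "TA n E v1 = (\<lambda>i. lam * v1 i)"
  proof -
    have "\<exists>v\<in>S2. ipr n v v = 1 \<and> (\<exists>lam. TA n E v = (\<lambda>i. lam * v i) \<and>
            (\<forall>u\<in>S2. lam * ipr n u u \<le> ipr n u (TA n E u)))"
    proof (rule rayleigh)
      show "\<And>i. continuous_on UNIV (\<lambda>v. TA n E v i)"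
        by (rule continuous_on_product_then_coordinatewise[OF TA_cont])
      show "\<And>u v a b. TA n E (\<lambda>i. a * u i + b * v i) = (\<lambda>i. a * TA n E u i + b * TA n E v i)"
        by (rule TA_lin)
      show "\<And>u v. ipr n u (TA n E v) = ipr n (TA n E u) v" by (rule TA_sym[OF Es])
      show "\<And>v i. v \<in> S2 \<Longrightarrow> n \<le> i \<Longrightarrow> v i = 0" unfolding S2_def by blast
      show "closed S2" by (rule closedS2)
      show "\<And>u v a b. u \<in> S2 \<Longrightarrow> v \<in> S2 \<Longrightarrow> (\<lambda>i. a * u i + b * v i) \<in> S2"
        unfolding S2_def by (simp add: TC_lin algebra_simps)
      show "\<And>v. v \<in> S2 \<Longrightarrow> TA n E v \<in> S2"
      proof -
        fix w assume w: "w \<in> S2"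
        then have "TC n E w = (\<lambda>i. mu * w i)" unfolding S2_def by auto
        then have "TC n E (TA n E w) = (\<lambda>i. mu * TA n E w i)"
          unfolding TC_TA by (simp add: TA_hom)
        then show "TA n E w \<in> S2" unfolding S2_def by (simp add: TA_0)
      qed
      show "v0 \<in> S2" using v0 unfolding S2_def V_def by simp
      show "ipr n v0 v0 \<noteq> 0" using v0 by simp
    qed
    then show ?thesis using that by blast
  qed
  obtain i where i: "i < n" "v1 i \<noteq> 0"
  proof -
    have "\<not> (\<forall>i<n. v1 i = 0)"
    proof
      assume "\<forall>i<n. v1 i = 0"
      then have "ipr n v1 v1 = 0" unfolding ipr_def by simp
      then show False using v1 by simp
    qed
    then show ?thesis using that by blast
  qed
  have "TC n E v1 i = (lam^6 - 5 * lam^4 + 4 * lam^2) * v1 i" using TC_eig[OF v1(3)] by simp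
  moreover have "TC n E v1 i = mu * v1 i" using v1(1) unfolding S2_def by blast
  ultimately have flam: "lam^6 - 5 * lam^4 + 4 * lam^2 = mu" using i by simp
  have notint: "lam \<notin> \<int>"
  proof
    assume "lam \<in> \<int>"
    then obtain m where m: "lam = of_int m" by (auto elim: Ints_cases)
    have "(0::real) \<le> of_int (m^6 - 5 * m^4 + 4 * m^2)" using int_poly_nonneg[of m] by linarith
    then have "0 \<le> lam^6 - 5 * lam^4 + 4 * lam^2" unfolding m by simp
    then show False using flam mu by simp
  qed
  have eig: "eigenvalue (adj_matrix n E) lam"
    unfolding eigenvalue_def eigenvector_def
  proof (intro exI conjI)
    let ?w = "vec n v1"
    show "?w \<in> carrier_vec (dim_row (adj_matrix n E))" by (simp add: adj_matrix_def)
    show "?w \<noteq> 0\<^sub>v (dim_row (adj_matrix n E))"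
    proof
      assume "?w = 0\<^sub>v (dim_row (adj_matrix n E))"
      then have "?w $ i = 0" using i by (simp add: adj_matrix_def)
      then show False using i by simp
    qed
    show "adj_matrix n E *\<^sub>v ?w = lam \<cdot>\<^sub>v ?w"
    proof (rule eq_vecI)
      fix j assume j: "j < dim_vec (lam \<cdot>\<^sub>v ?w)"
      then have jn: "j < n" by simp
      have "(adj_matrix n E *\<^sub>v ?w) $ j = (\<Sum>k\<in>{0..<n}. (if E j k then 1 else 0) * v1 k)"
        using jn by (simp add: adj_matrix_def scalar_prod_def)
      also have "\<dots> = TA n E v1 j" using jn by (simp add: TA_def atLeast0LessThan)
      also have "\<dots> = lam * v1 j" using v1(3) by simp
      finally show "(adj_matrix n E *\<^sub>v ?w) $ j = (lam \<cdot>\<^sub>v ?w) $ j" using jn by simp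
    next
      show "dim_vec (adj_matrix n E *\<^sub>v ?w) = dim_vec (lam \<cdot>\<^sub>v ?w)" by (simp add: adj_matrix_def)
    qed
  qed
  show ?thesis using eig notint by blast
qed

end
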